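(* In any packing produced by the algorithm OnlinePacker (described in the context), there are at most two near-empty boxes of each box type.
   Context: Setting: online translational strip packing. The strip is a horizontal strip of height 1, bounded on the left by a vertical segment and unbounded to the right. Pieces arrive one at a time, each must be placed by a translation only, interior-disjoint from previously placed pieces, before the next piece is revealed. Here all pieces are horizontal parallelograms (parallelograms with a pair of horizontal edges, the base edges) of height 1 and width at most 1. Box types: these form an infinite ternary tree. The root, the basic box type, is a 2 x 1 rectangle. A d-dimensional box type is a vector [x_1,...,x_d] in {-1,0,+1}^d and is a horizontal parallelogram of height 1. Given type T = [x_1,...,x_d] with bottom edge b and top edge t, split b into three equal consecutive segments b_{-1}, b_0, b_{+1} (left to right) and t likewise into t_{-1}, t_0, t_{+1}; the child type T ⊕ [x_{d+1}] = [x_1,...,x_d,x_{d+1}] is the parallelogram spanned by b_0 and t_{x_{d+1}}. Thus a d-dimensional type has base edges of length 2·3^{-d}. A box type T matches a piece P if P can be packed into T and area(T) ≤ 6·area(P) (such a type exists for every such P). A type is suitable for P if it is an ancestor (including itself) in the tree of a type matching P. Algorithm OnlinePacker: space in the strip is allocated for boxes of the various types; each box of type T contains either a single piece that T matches, or one, two or three boxes whose types are children of T. When a piece P arrives: if there exists an allocated box B_1 whose type T_1 is suitable for P (with T_1,...,T_k the tree path from T_1 to a type T_k matching P) and B_1 has room for one more box of type T_2, choose such a B_1 as small as possible (maximum dimension); then for i = 1,...,k-1 allocate in B_i a new empty box B_{i+1} of type T_{i+1} placed as far left in B_i as possible, and finally place P in B_k. If no such B_1 exists, allocate a new box of the basic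 type as far left in the strip as possible (not overlapping already allocated boxes), call it B_1, and proceed the same way. A d-dimensional box is near-empty if exactly one (d+1)-dimensional box is allocated in it. *)

theory Defs
  imports "HOL-Analysis.Analysis"
begin

text \<open>The plane is real \<times> real; first coordinate horizontal, second vertical.
  The strip has height 1, is bounded on the left by x = 0 and unbounded to the right.\<close>

definition strip :: "(real \<times> real) set" where
  "strip = {p. 0 \<le> fst p \<and> 0 \<le> snd p \<and> snd p \<le> 1}"

definition shift :: "real \<times> real \<Rightarrow> (real \<times> real) set \<Rightarrow> (real \<times> real) set" where
  "shift v S = (\<lambda>p. v + p) ` S"

definition idisj :: "(real \<times> real) set \<Rightarrow> (real \<times> real) set \<Rightarrow> bool" where
  "idisj A B \<longleftrightarrow> interior A \<inter> interior B = {}"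

definition area :: "(real \<times> real) set \<Rightarrow> real" where
  "area S = measure lborel S"

definition is_hpar :: "(real \<times> real) set \<Rightarrow> bool" where
  "is_hpar P \<longleftrightarrow> (\<exists>a c w s. w > 0 \<and>
      P = convex hull {(a, c), (a + w, c), (a + s, c + 1), (a + s + w, c + 1)})"

definition pwidth :: "(real \<times> real) set \<Rightarrow> real" where
  "pwidth P = (SUP p\<in>P. fst p) - (INF p\<in>P. fst p)"

definition packs_into :: "(real \<times> real) set \<Rightarrow> (real \<times> real) set \<Rightarrow> bool" where
  "packs_into P S \<longleftrightarrow> (\<exists>v. shift v P \<subseteq> S)"

definition valid_type :: "int list \<Rightarrow> bool" where
  "valid_type T \<longleftrightarrow> set T \<subseteq> {-1, 0, 1}"

text \<open>Edges of a type: ((bottom left, bottom right), (top left, top right)).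
  The child T @ [x] is spanned by the middle third of the bottom edge and the
  x-th third (x = -1, 0, +1 from left to right) of the top edge.\<close>
definition child_edges ::
  "(real \<times> real) \<times> (real \<times> real) \<Rightarrow> int \<Rightarrow> (real \<times> real) \<times> (real \<times> real)" where
  "child_edges e x =
     (let b = fst e; t = snd e; L = (snd b - fst b) / 3; M = (snd t - fst t) / 3
      in ((fst b + L, fst b + 2 * L),
          (fst t + (of_int x + 1) * M, fst t + (of_int x + 2) * M)))"

definition type_edges :: "int list \<Rightarrow> (real \<times> real) \<times> (real \<times> real)" where
  "type_edges T = foldl child_edges ((0, 2), (0, 2)) T"

text \<open>Canonical copy of the box type (bottom edge at height 0, top edge at height 1);
  the basic type [] is the rectangle [0,2] \<times> [0,1].\<close>
definition type_shape :: "int list \<Rightarrow> (real \<times> real) set" where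
  "type_shape T = (let b = fst (type_edges T); t = snd (type_edges T) in
     convex hull {(fst b, 0), (snd b, 0), (fst t, 1), (snd t, 1)})"

definition placed :: "int list \<Rightarrow> real \<times> real \<Rightarrow> (real \<times> real) set" where
  "placed T v = shift v (type_shape T)"

definition matches :: "int list \<Rightarrow> (real \<times> real) set \<Rightarrow> bool" where
  "matches T P \<longleftrightarrow> valid_type T \<and> packs_into P (type_shape T)
      \<and> area (type_shape T) \<le> 6 * area P"

text \<open>An allocated box: its type, its translation vector, and its parent box
  (None for boxes of the basic type allocated directly in the strip).
  Boxes are identified by their index in the list of allocated boxes;
  pieces are recorded with their placed position and the index of the box containing them.\<close>
record box =
  btype :: "int list"
  bpos :: "real \<times> real"
  bparent :: "nat option"

record pstate =
  boxes :: "box list"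
  pieces :: "((real \<times> real) set \<times> nat) list"

definition box_set :: "pstate \<Rightarrow> nat \<Rightarrow> (real \<times> real) set" where
  "box_set st i = placed (btype (boxes st ! i)) (bpos (boxes st ! i))"

definition children :: "pstate \<Rightarrow> nat \<Rightarrow> nat set" where
  "children st i = {j. j < length (boxes st) \<and> bparent (boxes st ! j) = Some i}"

definition has_piece :: "pstate \<Rightarrow> nat \<Rightarrow> bool" where
  "has_piece st i \<longleftrightarrow> (\<exists>q\<in>set (pieces st). snd q = i)"

definition near_empty :: "pstate \<Rightarrow> nat \<Rightarrow> bool" where
  "near_empty st i \<longleftrightarrow> card (children st i) = 1"

definition add_box :: "pstate \<Rightarrow> int list \<Rightarrow> real \<times> real \<Rightarrow> nat option \<Rightarrow> pstate" where
  "add_box st T v p = st\<lparr>boxes := boxes st @ [\<lparr>btype = T, bpos = v, bparent = p\<rparr>]\<rparr>"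

definition add_piece :: "pstate \<Rightarrow> (real \<times> real) set \<Rightarrow> nat \<Rightarrow> pstate" where
  "add_piece st Q i = st\<lparr>pieces := pieces st @ [(Q, i)]\<rparr>"

definition fits_child :: "pstate \<Rightarrow> nat \<Rightarrow> int list \<Rightarrow> real \<times> real \<Rightarrow> bool" where
  "fits_child st i T v \<longleftrightarrow> placed T v \<subseteq> box_set st i
     \<and> (\<forall>j\<in>children st i. idisj (placed T v) (box_set st j))"

definition leftmost_child :: "pstate \<Rightarrow> nat \<Rightarrow> int list \<Rightarrow> real \<times> real \<Rightarrow> bool" where
  "leftmost_child st i T v \<longleftrightarrow> fits_child st i T v
     \<and> (\<forall>v'. fits_child st i T v' \<longrightarrow> fst v \<le> fst v')"

definition fits_strip :: "pstate \<Rightarrow> real \<times> real \<Rightarrow> bool" where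
  "fits_strip st v \<longleftrightarrow> placed [] v \<subseteq> strip
     \<and> (\<forall>j < length (boxes st). idisj (placed [] v) (box_set st j))"

definition leftmost_strip :: "pstate \<Rightarrow> real \<times> real \<Rightarrow> bool" where
  "leftmost_strip st v \<longleftrightarrow> fits_strip st v \<and> (\<forall>v'. fits_strip st v' \<longrightarrow> fst v \<le> fst v')"

text \<open>(i, Tk) is a candidate for B_1: box i is allocated, holds no piece, its type T_1 is a
  proper ancestor of the matching type Tk, and it has room for one more box of type T_2.\<close>
definition candidate :: "pstate \<Rightarrow> (real \<times> real) set \<Rightarrow> nat \<Rightarrow> int list \<Rightarrow> bool" where
  "candidate st P i Tk \<longleftrightarrow> i < length (boxes st) \<and> \<not> has_piece st i \<and> matches Tk P
     \<and> take (length (btype (boxes st ! i))) Tk = btype (boxes st ! i)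
     \<and> length (btype (boxes st ! i)) < length Tk
     \<and> (\<exists>v. fits_child st i (take (Suc (length (btype (boxes st ! i)))) Tk) v)"

inductive alloc_chain :: "pstate \<Rightarrow> nat \<Rightarrow> int list list \<Rightarrow> pstate \<Rightarrow> nat \<Rightarrow> bool" where
  nil: "alloc_chain st p [] st p"
| cons: "leftmost_child st p T v \<Longrightarrow>
         alloc_chain (add_box st T v (Some p)) (length (boxes st)) Ts st' q \<Longrightarrow>
         alloc_chain st p (T # Ts) st' q"

text \<open>One step of OnlinePacker on arriving piece P (all unspecified tie-breaking is
  nondeterministic).\<close>
inductive op_step :: "pstate \<Rightarrow> (real \<times> real) set \<Rightarrow> pstate \<Rightarrow> bool" where
  existing:
  "candidate st P i Tk \<Longrightarrow>
   (\<forall>i' Tk'. candidate st P i' Tk' \<longrightarrow>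
        length (btype (boxes st ! i')) \<le> length (btype (boxes st ! i))) \<Longrightarrow>
   alloc_chain st i (map (\<lambda>j. take j Tk) [Suc (length (btype (boxes st ! i)))..<Suc (length Tk)])
       st1 q \<Longrightarrow>
   shift u P \<subseteq> box_set st1 q \<Longrightarrow>
   op_step st P (add_piece st1 (shift u P) q)"
| new:
  "\<not> (\<exists>i Tk. candidate st P i Tk) \<Longrightarrow>
   leftmost_strip st v \<Longrightarrow>
   matches Tk P \<Longrightarrow>
   alloc_chain (add_box st [] v None) (length (boxes st)) (map (\<lambda>j. take j Tk) [1..<Suc (length Tk)])
       st1 q \<Longrightarrow>
   shift u P \<subseteq> box_set st1 q \<Longrightarrow>
   op_step st P (add_piece st1 (shift u P) q)"

inductive reachable :: "pstate \<Rightarrow> bool" where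
  init: "reachable \<lparr>boxes = [], pieces = []\<rparr>"
| step: "reachable st \<Longrightarrow> is_hpar P \<Longrightarrow> pwidth P \<le> 1 \<Longrightarrow> op_step st P st' \<Longrightarrow> reachable st'"

end

theory Submission
  imports Defs
begin

definition PG :: "real \<Rightarrow> real \<Rightarrow> real \<Rightarrow> real \<Rightarrow> (real \<times> real) set" where
  "PG a c w s = {p. c \<le> snd p \<and> snd p \<le> c + 1 \<and> a + s * (snd p - c) \<le> fst p
                  \<and> fst p \<le> a + s * (snd p - c) + w}"

lemma convex_lin: "convex {p::real\<times>real. \<alpha> * fst p + \<beta> * snd p \<le> k}"
proof (rule convexI)
  fix x y :: "real \<times> real" and u v :: real
  assume x: "x \<in> {p. \<alpha> * fst p + \<beta> * snd p \<le> k}" and y: "y \<in> {p. \<alpha> * fst p + \<beta> * snd p \<le> k}"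
    and u: "0 \<le> u" and v: "0 \<le> v" and uv: "u + v = 1"
  have "u * (\<alpha> * fst x + \<beta> * snd x) \<le> u * k" using x u by (simp add: mult_left_mono)
  moreover have "v * (\<alpha> * fst y + \<beta> * snd y) \<le> v * k" using y v by (simp add: mult_left_mono)
  ultimately have "u * (\<alpha> * fst x + \<beta> * snd x) + v * (\<alpha> * fst y + \<beta> * snd y) \<le> (u + v) * k"
    by (simp add: distrib_right)
  then show "u *\<^sub>R x + v *\<^sub>R y \<in> {p. \<alpha> * fst p + \<beta> * snd p \<le> k}"
    using uv by (simp add: algebra_simps)
qed

lemma PG_inter: "PG a c w s =
   {p. 0 * fst p + (-1) * snd p \<le> - c} \<inter> {p. 0 * fst p + 1 * snd p \<le> c + 1}
   \<inter> {p. (-1) * fst p + s * snd p \<le> s * c - a} \<inter> {p. 1 * fst p + (- s) * snd p \<le> a - s * c + w}"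
  unfolding PG_def by (auto simp: algebra_simps)

lemma convex_PG: "convex (PG a c w s)"
  unfolding PG_inter by (intro convex_Int convex_lin)

lemma hull_PG:
  assumes w: "w > 0"
  shows "convex hull {(a,c),(a+w,c),(a+s,c+1),(a+s+w,c+1)} = PG a c w s" (is "?H = _")
proof
  show "?H \<subseteq> PG a c w s"
  proof (rule hull_minimal)
    show "{(a,c),(a+w,c),(a+s,c+1),(a+s+w,c+1)} \<subseteq> PG a c w s" using w by (auto simp: PG_def)
    show "convex (PG a c w s)" by (rule convex_PG)
  qed
  show "PG a c w s \<subseteq> ?H"
  proof
    fix p assume p: "p \<in> PG a c w s"
    obtain x y where xy: "p = (x, y)" by (cases p)
    define h where "h = y - c"
    define r where "r = (x - a - s * h) / w"
    have h: "0 \<le> h" "h \<le> 1" using p unfolding xy PG_def h_def by auto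
    have r: "0 \<le> r" "r \<le> 1" using p w unfolding xy PG_def h_def r_def by (auto simp: field_simps)
    have cvx: "convex ?H" by (rule convex_convex_hull)
    define q0 where "q0 = (1 - r) *\<^sub>R (a, c) + r *\<^sub>R (a + w, c)"
    define q1 where "q1 = (1 - r) *\<^sub>R (a + s, c + 1) + r *\<^sub>R (a + s + w, c + 1)"
    have q0: "q0 \<in> ?H" unfolding q0_def
      by (rule convexD[OF cvx]) (use r in \<open>auto intro: hull_inc\<close>)
    have q1: "q1 \<in> ?H" unfolding q1_def
      by (rule convexD[OF cvx]) (use r in \<open>auto intro: hull_inc\<close>)
    have "(1 - h) *\<^sub>R q0 + h *\<^sub>R q1 \<in> ?H"
      by (rule convexD[OF cvx q0 q1]) (use h in auto)
    moreover have "(1 - h) *\<^sub>R q0 + h *\<^sub>R q1 = p"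
      unfolding q0_def q1_def xy using w
      by (simp add: r_def h_def field_simps)
    ultimately show "p \<in> ?H" by simp
  qed
qed

lemma shift_PG: "shift v (PG a c w s) = PG (a + fst v) (c + snd v) w s"
proof -
  have "\<And>p. p \<in> PG (a + fst v) (c + snd v) w s \<Longrightarrow> p \<in> (\<lambda>p. v + p) ` PG a c w s"
  proof -
    fix p assume "p \<in> PG (a + fst v) (c + snd v) w s"
    then have "p - v \<in> PG a c w s" by (auto simp: PG_def algebra_simps)
    then show "p \<in> (\<lambda>p. v + p) ` PG a c w s" by (rule rev_image_eqI) simp
  qed
  then show ?thesis unfolding shift_def by (auto simp: PG_def algebra_simps)
qed

lemma PG_sub_iff:
  assumes "w' \<ge> 0"
  shows "PG a' c' w' s' \<subseteq> PG a c w s \<longleftrightarrow>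
    (c' = c \<and> a \<le> a' \<and> a' + w' \<le> a + w \<and> a + s \<le> a' + s' \<and> a' + s' + w' \<le> a + s + w)"
proof
  assume sub: "PG a' c' w' s' \<subseteq> PG a c w s"
  have 1: "(a', c') \<in> PG a c w s" using sub assms by (intro subsetD[OF sub]) (auto simp: PG_def)
  have 2: "(a' + w', c') \<in> PG a c w s" using sub assms by (intro subsetD[OF sub]) (auto simp: PG_def)
  have 3: "(a' + s', c' + 1) \<in> PG a c w s" using sub assms by (intro subsetD[OF sub]) (auto simp: PG_def)
  have 4: "(a' + s' + w', c' + 1) \<in> PG a c w s" using sub assms by (intro subsetD[OF sub]) (auto simp: PG_def)
  from 1 3 have cc: "c' = c" by (auto simp: PG_def)
  show "c' = c \<and> a \<le> a' \<and> a' + w' \<le> a + w \<and> a + s \<le> a' + s' \<and> a' + s' + w' \<le> a + s + w"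
    using 1 2 3 4 cc by (auto simp: PG_def)
next
  assume H: "c' = c \<and> a \<le> a' \<and> a' + w' \<le> a + w \<and> a + s \<le> a' + s' \<and> a' + s' + w' \<le> a + s + w"
  show "PG a' c' w' s' \<subseteq> PG a c w s"
  proof
    fix p assume p: "p \<in> PG a' c' w' s'"
    define h where "h = snd p - c"
    have h: "0 \<le> h" "h \<le> 1" using p H by (auto simp: PG_def h_def)
    have e1: "(1 - h) * (a - a') \<le> 0" using h H by (intro mult_nonneg_nonpos) auto
    have e2: "h * (a + s - a' - s') \<le> 0" using h H by (intro mult_nonneg_nonpos) auto
    have e3: "(1 - h) * (a' + w' - a - w) \<le> 0" using h H by (intro mult_nonneg_nonpos) auto
    have e4: "h * (a' + s' + w' - a - s - w) \<le> 0" using h H by (intro mult_nonneg_nonpos) auto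
    have "a + s * h \<le> a' + s' * h" using e1 e2 by (simp add: algebra_simps)
    moreover have "a' + s' * h + w' \<le> a + s * h + w" using e3 e4 by (simp add: algebra_simps)
    ultimately show "p \<in> PG a c w s" using p H by (auto simp: PG_def h_def)
  qed
qed

lemma interior_line_empty: "interior {p::real\<times>real. fst p - s * snd p = k} = {}"
proof (rule ccontr)
  assume "interior {p::real\<times>real. fst p - s * snd p = k} \<noteq> {}"
  then obtain p where "p \<in> interior {p::real\<times>real. fst p - s * snd p = k}" by auto
  then obtain e where e: "e > 0" "ball p e \<subseteq> {p::real\<times>real. fst p - s * snd p = k}"
    by (auto simp: mem_interior)
  have "p \<in> ball p e" using e by simp
  moreover have "p + (e/2, 0) \<in> ball p e"
    using e by (cases p) (simp add: dist_Pair_Pair dist_real_def)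
  ultimately have "fst p - s * snd p = k" "fst (p + (e/2,0)) - s * snd (p + (e/2, 0)) = k"
    using e(2) by blast+
  then show False using e(1) by (cases p) simp
qed

lemma PG_idisj:
  assumes "a1 + w1 \<le> a2" "a1 + s1 + w1 \<le> a2 + s2"
  shows "idisj (PG a1 c w1 s1) (PG a2 c w2 s2)"
proof -
  have "PG a1 c w1 s1 \<inter> PG a2 c w2 s2 \<subseteq> {p. fst p - s2 * snd p = a2 - s2 * c}"
  proof
    fix p assume p: "p \<in> PG a1 c w1 s1 \<inter> PG a2 c w2 s2"
    define h where "h = snd p - c"
    have h: "0 \<le> h" "h \<le> 1" using p by (auto simp: PG_def h_def)
    have e1: "(1 - h) * (a1 + w1 - a2) \<le> 0" using h assms by (intro mult_nonneg_nonpos) auto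
    have e2: "h * (a1 + s1 + w1 - a2 - s2) \<le> 0" using h assms by (intro mult_nonneg_nonpos) auto
    have "a1 + s1 * h + w1 \<le> a2 + s2 * h" using e1 e2 by (simp add: algebra_simps)
    then show "p \<in> {p. fst p - s2 * snd p = a2 - s2 * c}" using p
      by (auto simp: PG_def h_def algebra_simps)
  qed
  then have "interior (PG a1 c w1 s1 \<inter> PG a2 c w2 s2) = {}"
    using interior_mono interior_line_empty by blast
  then show ?thesis unfolding idisj_def by (simp add: interior_Int)
qed

definition bl :: "int list \<Rightarrow> real" where "bl T = fst (fst (type_edges T))"
definition W :: "int list \<Rightarrow> real" where "W T = snd (fst (type_edges T)) - bl T"
definition sl :: "int list \<Rightarrow> real" where "sl T = fst (snd (type_edges T)) - bl T"

lemma type_edges_snoc: "type_edges (T @ [x]) = child_edges (type_edges T) x"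
  by (simp add: type_edges_def)

lemma edges_inv: "W T > 0 \<and> snd (snd (type_edges T)) - fst (snd (type_edges T)) = W T"
proof (induction T rule: rev_induct)
  case Nil
  then show ?case by (simp add: W_def bl_def type_edges_def)
next
  case (snoc x T)
  then show ?case
    by (simp add: W_def bl_def type_edges_snoc child_edges_def Let_def field_simps)
qed

lemma child_params:
  "bl (T @ [x]) = bl T + W T / 3" "W (T @ [x]) = W T / 3" "sl (T @ [x]) = sl T + of_int x * (W T / 3)"
proof -
  obtain b1 b2 t1 t2 where e: "type_edges T = ((b1, b2), (t1, t2))" by (metis prod.collapse)
  have t2: "t2 = b2 + t1 - b1" using edges_inv[of T] e by (auto simp: W_def bl_def)
  show "bl (T @ [x]) = bl T + W T / 3" "W (T @ [x]) = W T / 3" "sl (T @ [x]) = sl T + of_int x * (W T / 3)"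
    by (simp_all add: e t2 W_def bl_def sl_def type_edges_snoc child_edges_def Let_def field_simps)
qed

lemma type_shape_PG: "type_shape T = PG (bl T) 0 (W T) (sl T)"
proof -
  obtain b1 b2 t1 t2 where e: "type_edges T = ((b1, b2), (t1, t2))" by (metis prod.collapse)
  have Wp: "W T > 0" and tw: "t2 - t1 = W T" using edges_inv[of T] e by auto
  have t2: "t2 = b2 + t1 - b1" and b2: "b2 = b1 + W T" using tw e by (auto simp: W_def bl_def)
  have "type_shape T = convex hull {(b1, 0), (b1 + W T, 0), (b1 + sl T, 0 + 1), (b1 + sl T + W T, 0 + 1)}"
    unfolding type_shape_def using e by (simp add: t2 b2 sl_def bl_def algebra_simps)
  also have "\<dots> = PG b1 0 (W T) (sl T)" by (rule hull_PG[OF Wp])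
  finally show ?thesis using e by (simp add: bl_def)
qed

lemma placed_PG: "placed T v = PG (bl T + fst v) (snd v) (W T) (sl T)"
  unfolding placed_def type_shape_PG shift_PG by simp


definition Good :: "pstate \<Rightarrow> nat \<Rightarrow> nat \<Rightarrow> bool" where
  "Good st i c \<longleftrightarrow> (\<exists>x. x \<in> {-1,0,1} \<and> btype (boxes st ! c) = btype (boxes st ! i) @ [x] \<and>
    (\<forall>y\<in>{-1,0,1}. (\<exists>v. fits_child st i (btype (boxes st ! i) @ [y]) v) \<or> (x \<noteq> 0 \<and> y = -x)))"

lemma idisj_sym: "idisj A B = idisj B A"
  unfolding idisj_def by blast

lemma first_child_good:
  assumes ch: "children st p = {}" and pn: "p < length (boxes st)"
    and lm: "leftmost_child st p (btype (boxes st ! p) @ [x]) v" and x: "x \<in> {-1,0,1}"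
  shows "Good (add_box st (btype (boxes st ! p) @ [x]) v (Some p)) p (length (boxes st))"
proof -
  define T where "T = btype (boxes st ! p)"
  define q0 where "q0 = bpos (boxes st ! p)"
  define n where "n = length (boxes st)"
  define st1 where "st1 = add_box st (T @ [x]) v (Some p)"
  define A where "A = bl T + fst q0"
  define c where "c = snd q0"
  define u where "u = W T / 3"
  define s where "s = sl T"
  have u: "u > 0" using edges_inv[of T] by (simp add: u_def)
  have bs: "box_set st p = PG A c (3 * u) s"
    by (simp add: box_set_def placed_PG A_def c_def u_def s_def T_def q0_def)
  have pl: "\<And>y v'. placed (T @ [y]) v' = PG (bl T + u + fst v') (snd v') u (s + of_int y * u)"
    by (simp add: placed_PG child_params u_def s_def)
  have fits0: "\<And>v'. fits_child st p (T @ [x]) v' \<longleftrightarrow> placed (T @ [x]) v' \<subseteq> box_set st p"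
    using ch by (simp add: fits_child_def)
  define t0 where "t0 = (if x = -1 then u else 0)"
  define v0 where "v0 = (A + t0 - bl T - u, c)"
  have "placed (T @ [x]) v0 \<subseteq> box_set st p"
    unfolding pl bs using u x
    by (subst PG_sub_iff) (auto simp: v0_def t0_def)
  then have "fst v \<le> fst v0" using lm fits0 unfolding leftmost_child_def T_def by blast
  moreover have "placed (T @ [x]) v \<subseteq> box_set st p" using lm fits0 unfolding leftmost_child_def T_def by blast
  then have cont: "snd v = c \<and> A \<le> bl T + u + fst v \<and> A + s \<le> bl T + u + fst v + (s + of_int x * u)"
    unfolding pl bs using u by (subst (asm) PG_sub_iff) auto
  ultimately have a1: "bl T + u + fst v = A + t0" and sv: "snd v = c"
    using x u by (auto simp: v0_def t0_def)
  have len1: "length (boxes st1) = Suc n" by (simp add: st1_def add_box_def n_def)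
  have nth1: "\<And>j. j < n \<Longrightarrow> boxes st1 ! j = boxes st ! j"
    by (simp add: st1_def add_box_def n_def nth_append)
  have nthn: "boxes st1 ! n = \<lparr>btype = T @ [x], bpos = v, bparent = Some p\<rparr>"
    by (simp add: st1_def add_box_def n_def)
  have ch1: "children st1 p = {n}"
  proof -
    have "\<And>j. j < n \<Longrightarrow> bparent (boxes st ! j) \<noteq> Some p" using ch by (auto simp: children_def n_def)
    then show ?thesis unfolding children_def len1 using nth1 nthn
      by (auto simp: less_Suc_eq)
  qed
  have bsp: "box_set st1 p = PG A c (3 * u) s"
    using bs pn nth1 by (simp add: box_set_def n_def)
  have bsn: "box_set st1 n = PG (A + t0) c u (s + of_int x * u)"
    using nthn a1 sv by (simp add: box_set_def pl)
  have "\<forall>y\<in>{-1,0,1}. (\<exists>v'. fits_child st1 p (T @ [y]) v') \<or> (x \<noteq> 0 \<and> y = -x)"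
  proof
    fix y :: int assume y: "y \<in> {-1,0,1}"
    show "(\<exists>v'. fits_child st1 p (T @ [y]) v') \<or> (x \<noteq> 0 \<and> y = -x)"
    proof (cases "x \<noteq> 0 \<and> y = -x")
      case True then show ?thesis by blast
    next
      case False
      define t2 where "t2 = (if y = 1 then u else 2 * u)"
      define v' where "v' = (A + t2 - bl T - u, c)"
      have pv: "placed (T @ [y]) v' = PG (A + t2) c u (s + of_int y * u)"
        by (simp add: pl v'_def)
      have sub: "placed (T @ [y]) v' \<subseteq> box_set st1 p"
        unfolding pv bsp using u y by (subst PG_sub_iff) (auto simp: t2_def)
      have "idisj (PG (A + t0) c u (s + of_int x * u)) (PG (A + t2) c u (s + of_int y * u))"
        using x y u False by (intro PG_idisj) (auto simp: t0_def t2_def)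
      then have "fits_child st1 p (T @ [y]) v'"
        unfolding fits_child_def ch1 using sub bsn pv by (simp add: idisj_sym)
      then show ?thesis by blast
    qed
  qed
  then show ?thesis unfolding Good_def
    using x nthn pn nth1 by (auto simp: st1_def[symmetric] T_def[symmetric] n_def[symmetric])
qed



lemma box_set_stable:
  assumes "\<forall>k<length (boxes st). boxes st' ! k = boxes st ! k" "j < length (boxes st)"
  shows "box_set st' j = box_set st j"
  using assms by (simp add: box_set_def)

lemma children_sub: "children st i \<subseteq> {..<length (boxes st)}"
  by (auto simp: children_def)

lemma fits_child_stable:
  assumes "\<forall>k<length (boxes st). boxes st' ! k = boxes st ! k" "i < length (boxes st)"
    "children st' i = children st i"
  shows "fits_child st' i T v = fits_child st i T v"
proof -
  have "\<And>j. j \<in> children st i \<Longrightarrow> box_set st' j = box_set st j"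
    using assms(1) children_sub by (meson box_set_stable lessThan_iff subsetD)
  then show ?thesis using assms(3) box_set_stable[OF assms(1,2)]
    unfolding fits_child_def by simp
qed

lemma Good_stable:
  assumes "\<forall>k<length (boxes st). boxes st' ! k = boxes st ! k" "i < length (boxes st)"
    "c < length (boxes st)" "children st' i = children st i"
  shows "Good st' i c = Good st i c"
  using assms(1-3) fits_child_stable[OF assms(1,2,4)] unfolding Good_def by simp

lemma chain:
  assumes "alloc_chain st p Ts st' q"
  shows "Ts = map (\<lambda>j. take j Tk) [Suc a..<Suc (length Tk)] \<Longrightarrow> a \<le> length Tk \<Longrightarrow>
    btype (boxes st ! p) = take a Tk \<Longrightarrow> p < length (boxes st) \<Longrightarrow> valid_type Tk \<Longrightarrow>
    (\<forall>j<length (boxes st). \<forall>p'. bparent (boxes st ! j) = Some p' \<longrightarrow> p' < j) \<Longrightarrow>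
    length (boxes st') = length (boxes st) + (length Tk - a)
    \<and> (\<forall>k<length (boxes st). boxes st' ! k = boxes st ! k)
    \<and> pieces st' = pieces st
    \<and> (\<forall>k<length Tk - a. btype (boxes st' ! (length (boxes st) + k)) = take (Suc a + k) Tk
          \<and> bparent (boxes st' ! (length (boxes st) + k)) = Some (if k = 0 then p else length (boxes st) + k - 1))
    \<and> q = (if a = length Tk then p else length (boxes st) + (length Tk - a) - 1)
    \<and> (a < length Tk \<longrightarrow> children st p = {} \<longrightarrow> Good st' p (length (boxes st)))
    \<and> (\<forall>k. Suc k < length Tk - a \<longrightarrow> Good st' (length (boxes st) + k) (length (boxes st) + Suc k))"
  using assms
proof (induction arbitrary: a rule: alloc_chain.induct)
  case (nil st p)
  then have "a = length Tk" by (cases "a < length Tk") auto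
  then show ?case by simp
next
  case (cons st p T v Ts st' q)
  define n where "n = length (boxes st)"
  define m where "m = length Tk"
  define st1 where "st1 = add_box st T v (Some p)"
  have am: "a < m"
  proof (rule ccontr)
    assume "\<not> a < m"
    then have "[Suc a..<Suc (length Tk)] = []" by (simp add: m_def)
    then show False using cons.prems(1) by simp
  qed
  have upt: "[Suc a..<Suc m] = Suc a # [Suc (Suc a)..<Suc m]" using am by (simp add: upt_conv_Cons)
  have TT: "T = take (Suc a) Tk" and Ts: "Ts = map (\<lambda>j. take j Tk) [Suc (Suc a)..<Suc m]"
    using cons.prems(1) upt by (simp_all add: m_def)
  define x where "x = Tk ! a"
  have x: "x \<in> {-1,0,1}" using cons.prems(5) am unfolding valid_type_def x_def m_def
    by (meson nth_mem subsetD)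
  have Tx: "T = btype (boxes st ! p) @ [x]"
    using TT cons.prems(3) am by (simp add: take_Suc_conv_app_nth x_def m_def)
  have len1: "length (boxes st1) = Suc n" by (simp add: st1_def add_box_def n_def)
  have nth1: "\<And>j. j < n \<Longrightarrow> boxes st1 ! j = boxes st ! j"
    by (simp add: st1_def add_box_def n_def nth_append)
  have nthn: "boxes st1 ! n = \<lparr>btype = T, bpos = v, bparent = Some p\<rparr>"
    by (simp add: st1_def add_box_def n_def)
  have par1: "\<forall>j<length (boxes st1). \<forall>p'. bparent (boxes st1 ! j) = Some p' \<longrightarrow> p' < j"
  proof (intro allI impI)
    fix j p' assume j: "j < length (boxes st1)" and pp: "bparent (boxes st1 ! j) = Some p'"
    show "p' < j"
    proof (cases "j < n")
      case True then show ?thesis using cons.prems(6) nth1 pp unfolding n_def by auto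
    next
      case False then have "j = n" using j len1 by simp
      then show ?thesis using nthn pp cons.prems(4) unfolding n_def by simp
    qed
  qed
  have IH: "length (boxes st') = length (boxes st1) + (length Tk - Suc a)
    \<and> (\<forall>k<length (boxes st1). boxes st' ! k = boxes st1 ! k)
    \<and> pieces st' = pieces st1
    \<and> (\<forall>k<length Tk - Suc a. btype (boxes st' ! (length (boxes st1) + k)) = take (Suc (Suc a) + k) Tk
          \<and> bparent (boxes st' ! (length (boxes st1) + k)) = Some (if k = 0 then length (boxes st) else length (boxes st1) + k - 1))
    \<and> q = (if Suc a = length Tk then length (boxes st) else length (boxes st1) + (length Tk - Suc a) - 1)
    \<and> (Suc a < length Tk \<longrightarrow> children st1 (length (boxes st)) = {} \<longrightarrow> Good st' (length (boxes st)) (length (boxes st1)))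
    \<and> (\<forall>k. Suc k < length Tk - Suc a \<longrightarrow> Good st' (length (boxes st1) + k) (length (boxes st1) + Suc k))"
    unfolding st1_def
  proof (rule cons.IH)
    show "Ts = map (\<lambda>j. take j Tk) [Suc (Suc a)..<Suc (length Tk)]" using Ts by (simp add: m_def)
    show "Suc a \<le> length Tk" using am by (simp add: m_def)
    show "btype (boxes (add_box st T v (Some p)) ! length (boxes st)) = take (Suc a) Tk"
      using nthn TT by (simp add: st1_def n_def)
    show "length (boxes st) < length (boxes (add_box st T v (Some p)))" by (simp add: add_box_def)
    show "valid_type Tk" by (rule cons.prems(5))
    show "\<forall>j<length (boxes (add_box st T v (Some p))). \<forall>p'. bparent (boxes (add_box st T v (Some p)) ! j) = Some p' \<longrightarrow> p' < j"
      using par1 by (simp add: st1_def)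
  qed
  then have L: "length (boxes st') = Suc n + (m - Suc a)"
    and P: "\<forall>k<Suc n. boxes st' ! k = boxes st1 ! k"
    and Pc: "pieces st' = pieces st1"
    and N: "\<forall>k<m - Suc a. btype (boxes st' ! (Suc n + k)) = take (Suc (Suc a) + k) Tk
          \<and> bparent (boxes st' ! (Suc n + k)) = Some (if k = 0 then n else Suc n + k - 1)"
    and Q: "q = (if Suc a = m then n else Suc n + (m - Suc a) - 1)"
    and G1: "Suc a < m \<longrightarrow> children st1 n = {} \<longrightarrow> Good st' n (Suc n)"
    and G2: "\<forall>k. Suc k < m - Suc a \<longrightarrow> Good st' (Suc n + k) (Suc n + Suc k)"
    unfolding len1 n_def[symmetric] m_def[symmetric] by auto
  have chn: "children st1 n = {}"
    unfolding children_def len1 using cons.prems(6) nth1 nthn cons.prems(4) unfolding n_def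
    by (auto simp: less_Suc_eq)
  have prefix: "\<forall>k<n. boxes st' ! k = boxes st ! k" using P nth1 by simp
  have P1: "\<forall>k<length (boxes st1). boxes st' ! k = boxes st1 ! k" using P len1 by simp
  have chp: "children st' p = children st1 p"
  proof -
    have "\<And>j. j < length (boxes st') \<Longrightarrow> Suc n \<le> j \<Longrightarrow> bparent (boxes st' ! j) \<noteq> Some p"
    proof -
      fix j assume j: "j < length (boxes st')" "Suc n \<le> j"
      then obtain k where k: "j = Suc n + k" "k < m - Suc a" using L by (metis add_less_cancel_left le_Suc_ex)
      then show "bparent (boxes st' ! j) \<noteq> Some p" using N cons.prems(4) unfolding n_def by auto
    qed
    note * = this
    show ?thesis
    proof (rule set_eqI)
      fix j
      show "j \<in> children st' p \<longleftrightarrow> j \<in> children st1 p"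
      proof (cases "j < Suc n")
        case True then show ?thesis using P len1 L by (auto simp: children_def)
      next
        case False then show ?thesis using * len1 by (auto simp: children_def)
      qed
    qed
  qed
  show ?case
  proof (intro conjI allI impI)
    show "length (boxes st') = length (boxes st) + (length Tk - a)" using L am by (simp add: n_def m_def)
    show "\<And>k. k < length (boxes st) \<Longrightarrow> boxes st' ! k = boxes st ! k" using prefix by (simp add: n_def)
    show "pieces st' = pieces st" using Pc by (simp add: st1_def add_box_def)
    fix k assume k: "k < length Tk - a"
    show "btype (boxes st' ! (length (boxes st) + k)) = take (Suc a + k) Tk"
    proof (cases k)
      case 0 then show ?thesis using P nthn TT by (simp add: n_def)
    next
      case (Suc k') then show ?thesis using N k by (simp add: n_def m_def)
    qed
    show "bparent (boxes st' ! (length (boxes st) + k)) = Some (if k = 0 then p else length (boxes st) + k - 1)"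
    proof (cases k)
      case 0 then show ?thesis using P nthn by (simp add: n_def)
    next
      case (Suc k') then show ?thesis using N k by (simp add: n_def m_def)
    qed
  next
    show "q = (if a = length Tk then p else length (boxes st) + (length Tk - a) - 1)"
      using Q am by (auto simp: n_def m_def)
  next
    assume "children st p = {}"
    then have "Good st1 p n" unfolding st1_def n_def Tx
      using first_child_good[of st p x v] cons.hyps(1) Tx cons.prems(4) x by simp
    moreover have "Good st' p n = Good st1 p n"
      using Good_stable[OF P1 _ _ chp] cons.prems(4) len1 by (simp add: n_def)
    ultimately show "Good st' p (length (boxes st))" by (simp add: n_def)
  next
    fix k assume k: "Suc k < length Tk - a"
    show "Good st' (length (boxes st) + k) (length (boxes st) + Suc k)"
    proof (cases k)
      case 0 then show ?thesis using G1 chn k by (simp add: n_def m_def)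
    next
      case (Suc k') then show ?thesis using G2 k by (simp add: n_def m_def)
    qed
  qed
qed



definition Inv :: "pstate \<Rightarrow> bool" where
 "Inv st \<longleftrightarrow>
   (\<forall>j<length (boxes st). \<forall>p. bparent (boxes st ! j) = Some p \<longrightarrow> p < j) \<and>
   (\<forall>q\<in>set (pieces st). snd q < length (boxes st) \<and> children st (snd q) = {}) \<and>
   (\<forall>i<length (boxes st). children st i = {} \<longrightarrow> has_piece st i) \<and>
   (\<forall>i<length (boxes st). \<forall>c. children st i = {c} \<longrightarrow> Good st i c) \<and>
   (\<forall>i j ci cj. i < j \<longrightarrow> j < length (boxes st) \<longrightarrow> btype (boxes st ! i) = btype (boxes st ! j) \<longrightarrow>
       children st i = {ci} \<longrightarrow> children st j = {cj} \<longrightarrow>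
       last (btype (boxes st ! ci)) \<noteq> 0 \<and> last (btype (boxes st ! cj)) = - last (btype (boxes st ! ci)))"

lemma Good_add_piece: "Good (add_piece st Q q) = Good st"
  unfolding Good_def fits_child_def box_set_def children_def add_piece_def by simp

lemma children_add_piece: "children (add_piece st Q q) = children st"
  unfolding children_def add_piece_def by simp

lemma has_piece_add_piece: "has_piece (add_piece st Q q) i \<longleftrightarrow> has_piece st i \<or> i = q"
  unfolding has_piece_def add_piece_def by auto

lemma post_chain:
  assumes inv: "Inv st"
  and len: "length (boxes st1) = length (boxes st) + K" and K: "K \<ge> 1"
  and pre: "\<forall>k<length (boxes st). boxes st1 ! k = boxes st ! k"
  and pc: "pieces st1 = pieces st"
  and ty: "\<forall>k<K. btype (boxes st1 ! (length (boxes st) + k)) = take (lo + k) Tk"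
  and par: "\<forall>k<K. bparent (boxes st1 ! (length (boxes st) + k)) = (if k = 0 then R else Some (length (boxes st) + k - 1))"
  and R: "R = None \<or> (\<exists>r. R = Some r \<and> r < length (boxes st) \<and> \<not> has_piece st r)"
  and m: "lo + K = Suc (length Tk)"
  and good: "\<forall>k. Suc k < K \<longrightarrow> Good st1 (length (boxes st) + k) (length (boxes st) + Suc k)"
  and blk: "\<forall>i<length (boxes st). \<forall>d. lo \<le> d \<longrightarrow> d < length Tk \<longrightarrow> btype (boxes st ! i) = take d Tk
      \<longrightarrow> \<not> has_piece st i \<longrightarrow> \<not> (\<exists>v. fits_child st i (take (Suc d) Tk) v)"
  and vt: "valid_type Tk"
  shows "Inv (add_piece st1 Q (length (boxes st) + K - 1))"
proof -
  define n where "n = length (boxes st)"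
  define qq where "qq = n + K - 1"
  define st' where "st' = add_piece st1 Q qq"
  note I = inv[unfolded Inv_def, folded n_def]
  note I1 = conjunct1[OF I]
  note I2 = conjunct1[OF conjunct2[OF I]]
  note I3 = conjunct1[OF conjunct2[OF conjunct2[OF I]]]
  note I4 = conjunct1[OF conjunct2[OF conjunct2[OF conjunct2[OF I]]]]
  note I5 = conjunct2[OF conjunct2[OF conjunct2[OF conjunct2[OF I]]]]
  have len': "length (boxes st') = n + K" using len by (simp add: st'_def add_piece_def n_def)
  have bx': "boxes st' = boxes st1" by (simp add: st'_def add_piece_def)
  have ch': "children st' = children st1" by (simp add: st'_def children_add_piece)
  have Gd': "Good st' = Good st1" by (simp add: st'_def Good_add_piece)
  have hp': "\<And>i. has_piece st' i \<longleftrightarrow> has_piece st i \<or> i = qq"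
    unfolding st'_def has_piece_def add_piece_def using pc by auto
  have pre': "\<And>k. k < n \<Longrightarrow> boxes st1 ! k = boxes st ! k" using pre by (simp add: n_def)
  have new_cases: "\<And>j. j < n + K \<Longrightarrow> \<not> j < n \<Longrightarrow> \<exists>k. j = n + k \<and> k < K"
    by (metis add_less_cancel_left le_Suc_ex not_less)
  have chold: "\<And>i. i < n \<Longrightarrow> children st1 i = children st i \<union> (if R = Some i then {n} else {})"
  proof -
    fix i assume i: "i < n"
    show "children st1 i = children st i \<union> (if R = Some i then {n} else {})"
    proof (rule set_eqI)
      fix j
      show "j \<in> children st1 i \<longleftrightarrow> j \<in> children st i \<union> (if R = Some i then {n} else {})"
      proof (cases "j < n")
        case True then show ?thesis using pre' len i by (auto simp: children_def n_def)
      next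
        case False
        have "j \<notin> children st i" using False by (auto simp: children_def n_def)
        moreover have "j \<in> children st1 i \<longleftrightarrow> (R = Some i \<and> j = n)"
        proof
          assume "j \<in> children st1 i"
          then have j: "j < n + K" "bparent (boxes st1 ! j) = Some i" using len by (auto simp: children_def n_def)
          then obtain k where k: "j = n + k" "k < K" using new_cases False by blast
          then show "R = Some i \<and> j = n" using par j(2) i by (auto simp: n_def split: if_splits)
        next
          assume "R = Some i \<and> j = n"
          then show "j \<in> children st1 i" using par K len by (auto simp: children_def n_def)
        qed
        ultimately show ?thesis by auto
      qed
    qed
  qed
  have chnew: "\<And>k. k < K \<Longrightarrow> children st1 (n + k) = (if Suc k < K then {n + Suc k} else {})"
  proof -
    fix k assume k: "k < K"
    show "children st1 (n + k) = (if Suc k < K then {n + Suc k} else {})"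
    proof (rule set_eqI)
      fix j
      show "j \<in> children st1 (n + k) \<longleftrightarrow> j \<in> (if Suc k < K then {n + Suc k} else {})"
      proof (cases "j < n")
        case True
        have "bparent (boxes st1 ! j) \<noteq> Some (n + k)"
        proof
          assume "bparent (boxes st1 ! j) = Some (n + k)"
          then have "bparent (boxes st ! j) = Some (n + k)" using pre' True by simp
          then have "n + k < j" using I1 True by blast
          then show False using True by simp
        qed
        then have "j \<notin> children st1 (n + k)" by (simp add: children_def)
        then show ?thesis using True by auto
      next
        case False
        show ?thesis
        proof
          assume "j \<in> children st1 (n + k)"
          then have j: "j < n + K" "bparent (boxes st1 ! j) = Some (n + k)" using len by (auto simp: children_def n_def)
          then obtain k' where k': "j = n + k'" "k' < K" using new_cases False by blast
          then have "bparent (boxes st1 ! (n + k')) = (if k' = 0 then R else Some (n + k' - 1))"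
            using par by (simp add: n_def)
          then show "j \<in> (if Suc k < K then {n + Suc k} else {})" using j k' R
            by (auto simp: n_def split: if_splits)
        next
          assume "j \<in> (if Suc k < K then {n + Suc k} else {})"
          then have "Suc k < K" "j = n + Suc k" by (auto split: if_splits)
          then show "j \<in> children st1 (n + k)" using par len by (auto simp: children_def n_def)
        qed
      qed
    qed
  qed
  have nohp: "\<And>i. i < n \<Longrightarrow> children st i \<noteq> {} \<Longrightarrow> \<not> has_piece st i"
    using I2 unfolding has_piece_def by blast
  have old1: "\<And>i c. i < n \<Longrightarrow> children st1 i = {c} \<Longrightarrow> children st i = {c}"
  proof -
    fix i c assume i: "i < n" and c: "children st1 i = {c}"
    show "children st i = {c}"
    proof (cases "R = Some i")
      case True
      then have e: "children st i \<union> {n} = {c}" using chold[OF i] c by simp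
      have nin: "n \<notin> children st i" using children_sub[of st i] by (auto simp: n_def)
      have cn: "c = n" using e by (metis Un_insert_right insert_iff singletonD)
      have "children st i \<subseteq> {n}" using e cn by (metis Un_upper1)
      then have "children st i = {}" using nin by (auto simp: subset_singleton_iff)
      then have "has_piece st i" using I3 i by blast
      then show ?thesis using R True by auto
    next
      case False then show ?thesis using chold[OF i] c by simp
    qed
  qed
  have P1: "\<forall>j<n + K. \<forall>p. bparent (boxes st1 ! j) = Some p \<longrightarrow> p < j"
  proof (intro allI impI)
    fix j p assume j: "j < n + K" and pj: "bparent (boxes st1 ! j) = Some p"
    show "p < j"
    proof (cases "j < n")
      case True
      then have "bparent (boxes st ! j) = Some p" using pre' pj by simp
      then show ?thesis using I1 True by blast
    next
      case False
      then obtain k where k: "j = n + k" "k < K" using new_cases j by blast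
      then show ?thesis using par pj R by (auto simp: n_def split: if_splits)
    qed
  qed
  have P2: "\<forall>q\<in>set (pieces st'). snd q < n + K \<and> children st' (snd q) = {}"
  proof
    fix q assume q: "q \<in> set (pieces st')"
    then have "q \<in> set (pieces st) \<or> q = (Q, qq)" by (auto simp: st'_def add_piece_def pc)
    then show "snd q < n + K \<and> children st' (snd q) = {}"
    proof
      assume q: "q \<in> set (pieces st)"
      then have a: "snd q < n" "children st (snd q) = {}" using I2 by auto
      have "has_piece st (snd q)" using q by (auto simp: has_piece_def)
      then have "R \<noteq> Some (snd q)" using R by auto
      then show ?thesis using a chold[OF a(1)] ch' by simp
    next
      assume "q = (Q, qq)"
      then show ?thesis using chnew[of "K - 1"] K ch' by (simp add: qq_def)
    qed
  qed
  have P3: "\<forall>i<n + K. children st' i = {} \<longrightarrow> has_piece st' i"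
  proof (intro allI impI)
    fix i assume i: "i < n + K" and ci: "children st' i = {}"
    show "has_piece st' i"
    proof (cases "i < n")
      case True
      then have "children st i = {}" using chold ci ch' by auto
      then show ?thesis using I3 True hp' by auto
    next
      case False
      then obtain k where k: "i = n + k" "k < K" using new_cases i by blast
      then have "\<not> Suc k < K" using chnew[of k] ci ch' by (auto split: if_splits)
      then have "i = qq" using k by (simp add: qq_def)
      then show ?thesis using hp' by simp
    qed
  qed
  have P4: "\<forall>i<n + K. \<forall>c. children st' i = {c} \<longrightarrow> Good st' i c"
  proof (intro allI impI)
    fix i c assume i: "i < n + K" and ci: "children st' i = {c}"
    show "Good st' i c"
    proof (cases "i < n")
      case True
      then have cs: "children st i = {c}" using old1[OF True] ci ch' by simp
      then have "c < n" using children_sub[of st i] by (auto simp: n_def)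
      moreover have "Good st i c" using I4 True cs by blast
      ultimately show ?thesis using Good_stable[of st st1 i c] pre True cs ci ch' Gd'
        by (simp add: n_def)
    next
      case False
      then obtain k where k: "i = n + k" "k < K" using new_cases i by blast
      then have "Suc k < K" "c = n + Suc k" using chnew[of k] ci ch' by (auto split: if_splits)
      then show ?thesis using good k Gd' by (simp add: n_def)
    qed
  qed
  have lenT: "\<And>d. d \<le> length Tk \<Longrightarrow> length (take d Tk) = d" by simp
  have P5: "\<forall>i j ci cj. i < j \<longrightarrow> j < n + K \<longrightarrow> btype (boxes st' ! i) = btype (boxes st' ! j) \<longrightarrow>
       children st' i = {ci} \<longrightarrow> children st' j = {cj} \<longrightarrow>
       last (btype (boxes st' ! ci)) \<noteq> 0 \<and> last (btype (boxes st' ! cj)) = - last (btype (boxes st' ! ci))"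
  proof (intro allI impI)
    fix i j ci cj
    assume ij: "i < j" and j: "j < n + K" and bt: "btype (boxes st' ! i) = btype (boxes st' ! j)"
      and ci: "children st' i = {ci}" and cj: "children st' j = {cj}"
    show "last (btype (boxes st' ! ci)) \<noteq> 0 \<and> last (btype (boxes st' ! cj)) = - last (btype (boxes st' ! ci))"
    proof (cases "j < n")
      case True
      then have i: "i < n" using ij by simp
      have ci0: "children st i = {ci}" using old1[OF i] ci ch' by simp
      have cj0: "children st j = {cj}" using old1[OF True] cj ch' by simp
      have "ci < n" "cj < n" using ci0 cj0 children_sub[of st i] children_sub[of st j] by (auto simp: n_def)
      moreover have bt0: "btype (boxes st ! i) = btype (boxes st ! j)" using bt bx' pre' i True by simp
      note X = I5[rule_format, OF ij True bt0 ci0 cj0]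
      ultimately show ?thesis using X pre' bx' by simp
    next
      case False
      then obtain k where k: "j = n + k" "k < K" using new_cases j by blast
      have sk: "Suc k < K" and cjv: "cj = n + Suc k" using chnew[of k] cj ch' k by (auto split: if_splits)
      have btj: "btype (boxes st1 ! j) = take (lo + k) Tk" using ty k by (simp add: n_def)
      have btcj: "btype (boxes st1 ! cj) = take (Suc (lo + k)) Tk"
        using ty[rule_format, OF sk] cjv by (simp add: n_def)
      define d where "d = lo + k"
      have dl: "d < length Tk" using m sk by (simp add: d_def)
      show ?thesis
      proof (cases "i < n")
        case False
        then obtain k1 where k1: "i = n + k1" "k1 < K" using new_cases ij j by (meson less_trans)
        have "btype (boxes st1 ! i) = take (lo + k1) Tk" using ty k1 by (simp add: n_def)
        then have "take (lo + k1) Tk = take (lo + k) Tk" using bt btj bx' by simp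
        then have "length (take (lo + k1) Tk) = length (take (lo + k) Tk)" by simp
        moreover have "lo + k1 < lo + k" using ij k k1 by simp
        ultimately have False using dl by (simp add: d_def)
        then show ?thesis ..
      next
        case True
        have ci0: "children st i = {ci}" using old1[OF True] ci ch' by simp
        have cin: "ci < n" using ci0 children_sub[of st i] by (auto simp: n_def)
        have nh: "\<not> has_piece st i" using nohp True ci0 by auto
        have bti: "btype (boxes st ! i) = take d Tk" using bt btj bx' pre' True by (simp add: d_def)
        have nf: "\<not> (\<exists>v. fits_child st i (take (Suc d) Tk) v)"
          using blk True nh bti dl by (auto simp: n_def d_def)
        obtain x where x: "x \<in> {-1,0,1}" "btype (boxes st ! ci) = btype (boxes st ! i) @ [x]"
          and fy: "\<forall>y\<in>{-1,0,1}. (\<exists>v. fits_child st i (btype (boxes st ! i) @ [y]) v) \<or> (x \<noteq> 0 \<and> y = -x)"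
          using I4 True ci0 unfolding Good_def by blast
        have y: "Tk ! d \<in> {-1,0,1}" using vt dl unfolding valid_type_def by (meson nth_mem subsetD)
        have ts: "take (Suc d) Tk = btype (boxes st ! i) @ [Tk ! d]" using bti dl by (simp add: take_Suc_conv_app_nth)
        have "x \<noteq> 0 \<and> Tk ! d = -x" using fy y nf ts by auto
        moreover have "last (btype (boxes st' ! ci)) = x" using x cin pre' bx' by simp
        moreover have "last (btype (boxes st' ! cj)) = Tk ! d" using btcj bx' ts by (simp add: d_def)
        ultimately show ?thesis by simp
      qed
    qed
  qed
  show ?thesis unfolding Inv_def st'_def[symmetric] qq_def[symmetric] n_def[symmetric] len'
    using P1 P2 P3 P4 P5 bx' by simp
qed


lemma Inv_init: "Inv \<lparr>boxes = [], pieces = []\<rparr>"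
  unfolding Inv_def by (simp add: children_def)

lemma Inv_step:
  assumes inv: "Inv st" and os: "op_step st P st'"
  shows "Inv st'"
  using os
proof cases
  case (existing i Tk st1 q u)
  define n where "n = length (boxes st)"
  define a where "a = length (btype (boxes st ! i))"
  define m where "m = length Tk"
  have c: "i < n" "\<not> has_piece st i" "matches Tk P" "take a Tk = btype (boxes st ! i)" "a < m"
    using existing(2) unfolding candidate_def n_def a_def m_def by auto
  have vt: "valid_type Tk" using c(3) by (simp add: matches_def)
  have I1: "\<forall>j<length (boxes st). \<forall>p'. bparent (boxes st ! j) = Some p' \<longrightarrow> p' < j"
    by (rule conjunct1[OF inv[unfolded Inv_def]])
  have ch: "length (boxes st1) = length (boxes st) + (length Tk - a)
    \<and> (\<forall>k<length (boxes st). boxes st1 ! k = boxes st ! k)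
    \<and> pieces st1 = pieces st
    \<and> (\<forall>k<length Tk - a. btype (boxes st1 ! (length (boxes st) + k)) = take (Suc a + k) Tk
          \<and> bparent (boxes st1 ! (length (boxes st) + k)) = Some (if k = 0 then i else length (boxes st) + k - 1))
    \<and> q = (if a = length Tk then i else length (boxes st) + (length Tk - a) - 1)
    \<and> (a < length Tk \<longrightarrow> children st i = {} \<longrightarrow> Good st1 i (length (boxes st)))
    \<and> (\<forall>k. Suc k < length Tk - a \<longrightarrow> Good st1 (length (boxes st) + k) (length (boxes st) + Suc k))"
    by (rule chain[OF existing(4)[folded a_def]]) (use c vt I1 in \<open>auto simp: n_def m_def\<close>)
  have q: "q = length (boxes st) + (m - a) - 1" using ch c by (simp add: m_def)
  show ?thesis unfolding existing(1) q
  proof (rule post_chain[where lo = "Suc a" and Tk = Tk and R = "Some i"])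
    show "Inv st" by (rule inv)
    show "length (boxes st1) = length (boxes st) + (m - a)" using ch by (simp add: m_def)
    show "1 \<le> m - a" using c by simp
    show "\<forall>k<length (boxes st). boxes st1 ! k = boxes st ! k" using ch by simp
    show "pieces st1 = pieces st" using ch by simp
    show "\<forall>k<m - a. btype (boxes st1 ! (length (boxes st) + k)) = take (Suc a + k) Tk"
      using ch by (simp add: m_def)
    show "\<forall>k<m - a. bparent (boxes st1 ! (length (boxes st) + k)) =
        (if k = 0 then Some i else Some (length (boxes st) + k - 1))"
      using ch by (simp add: m_def)
    show "Some i = None \<or> (\<exists>r. Some i = Some r \<and> r < length (boxes st) \<and> \<not> has_piece st r)"
      using c by (simp add: n_def)
    show "Suc a + (m - a) = Suc (length Tk)" using c by (simp add: m_def)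
    show "\<forall>k. Suc k < m - a \<longrightarrow> Good st1 (length (boxes st) + k) (length (boxes st) + Suc k)"
      using ch by (simp add: m_def)
    show "valid_type Tk" by (rule vt)
    show "\<forall>i'<length (boxes st). \<forall>d. Suc a \<le> d \<longrightarrow> d < length Tk \<longrightarrow> btype (boxes st ! i') = take d Tk
      \<longrightarrow> \<not> has_piece st i' \<longrightarrow> \<not> (\<exists>v. fits_child st i' (take (Suc d) Tk) v)"
    proof (intro allI impI notI)
      fix i' d assume i': "i' < length (boxes st)" and d: "Suc a \<le> d" "d < length Tk"
        and bt: "btype (boxes st ! i') = take d Tk" and nh: "\<not> has_piece st i'"
        and f: "\<exists>v. fits_child st i' (take (Suc d) Tk) v"
      have ld: "length (btype (boxes st ! i')) = d" using bt d by simp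
      have "candidate st P i' Tk" unfolding candidate_def using i' nh c(3) bt ld d f by simp
      then have "length (btype (boxes st ! i')) \<le> a" using existing(3) unfolding a_def by blast
      then have "d \<le> a" using ld by simp
      then show False using d by simp
    qed
  qed
next
  case (new v Tk st1 q u)
  define n where "n = length (boxes st)"
  define m where "m = length Tk"
  define st0 where "st0 = add_box st [] v None"
  have vt: "valid_type Tk" using new(4) by (simp add: matches_def)
  have I1: "\<forall>j<length (boxes st). \<forall>p'. bparent (boxes st ! j) = Some p' \<longrightarrow> p' < j"
    by (rule conjunct1[OF inv[unfolded Inv_def]])
  have len0: "length (boxes st0) = Suc n" by (simp add: st0_def add_box_def n_def)
  have nth0: "\<And>j. j < n \<Longrightarrow> boxes st0 ! j = boxes st ! j"
    by (simp add: st0_def add_box_def n_def nth_append)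
  have nthn: "boxes st0 ! n = \<lparr>btype = [], bpos = v, bparent = None\<rparr>"
    by (simp add: st0_def add_box_def n_def)
  have I10: "\<forall>j<length (boxes st0). \<forall>p'. bparent (boxes st0 ! j) = Some p' \<longrightarrow> p' < j"
  proof (intro allI impI)
    fix j p' assume j: "j < length (boxes st0)" and pj: "bparent (boxes st0 ! j) = Some p'"
    show "p' < j"
    proof (cases "j < n")
      case True then show ?thesis using I1 nth0 pj by (auto simp: n_def)
    next
      case False then have "j = n" using j len0 by simp
      then show ?thesis using nthn pj by simp
    qed
  qed
  have chn0: "children st0 n = {}"
  proof -
    have "\<And>j. j < Suc n \<Longrightarrow> bparent (boxes st0 ! j) \<noteq> Some n"
    proof -
      fix j assume j: "j < Suc n"
      show "bparent (boxes st0 ! j) \<noteq> Some n"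
      proof (cases "j < n")
        case True
        show ?thesis
        proof
          assume "bparent (boxes st0 ! j) = Some n"
          then have "bparent (boxes st ! j) = Some n" using nth0 True by simp
          then have "n < j" using I1 True by (auto simp: n_def)
          then show False using True by simp
        qed
      next
        case False then have "j = n" using j by simp
        then show ?thesis using nthn by simp
      qed
    qed
    then show ?thesis unfolding children_def len0 by auto
  qed
  have ch: "length (boxes st1) = length (boxes st0) + (length Tk - 0)
    \<and> (\<forall>k<length (boxes st0). boxes st1 ! k = boxes st0 ! k)
    \<and> pieces st1 = pieces st0
    \<and> (\<forall>k<length Tk - 0. btype (boxes st1 ! (length (boxes st0) + k)) = take (Suc 0 + k) Tk
          \<and> bparent (boxes st1 ! (length (boxes st0) + k)) = Some (if k = 0 then n else length (boxes st0) + k - 1))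
    \<and> q = (if 0 = length Tk then n else length (boxes st0) + (length Tk - 0) - 1)
    \<and> (0 < length Tk \<longrightarrow> children st0 n = {} \<longrightarrow> Good st1 n (length (boxes st0)))
    \<and> (\<forall>k. Suc k < length Tk - 0 \<longrightarrow> Good st1 (length (boxes st0) + k) (length (boxes st0) + Suc k))"
    by (rule chain) (use new(5) I10 vt nthn in \<open>simp_all add: st0_def n_def add_box_def\<close>)
  then have L: "length (boxes st1) = n + Suc m"
    and P: "\<forall>k<Suc n. boxes st1 ! k = boxes st0 ! k"
    and Pc: "pieces st1 = pieces st"
    and N: "\<forall>k<m. btype (boxes st1 ! (Suc n + k)) = take (Suc k) Tk
          \<and> bparent (boxes st1 ! (Suc n + k)) = Some (if k = 0 then n else Suc n + k - 1)"
    and Q: "q = n + Suc m - 1"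
    and G1: "0 < m \<longrightarrow> Good st1 n (Suc n)"
    and G2: "\<forall>k. Suc k < m \<longrightarrow> Good st1 (Suc n + k) (Suc n + Suc k)"
    unfolding len0 m_def[symmetric] using chn0 by (auto simp: st0_def add_box_def)
  show ?thesis unfolding new(1) Q n_def
  proof (rule post_chain[where lo = 0 and Tk = Tk and R = None])
    show "Inv st" by (rule inv)
    show "length (boxes st1) = length (boxes st) + Suc m" using L by (simp add: n_def)
    show "1 \<le> Suc m" by simp
    show "\<forall>k<length (boxes st). boxes st1 ! k = boxes st ! k" using P nth0 by (simp add: n_def)
    show "pieces st1 = pieces st" by (rule Pc)
    show "\<forall>k<Suc m. btype (boxes st1 ! (length (boxes st) + k)) = take (0 + k) Tk"
    proof (intro allI impI)
      fix k assume k: "k < Suc m"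
      show "btype (boxes st1 ! (length (boxes st) + k)) = take (0 + k) Tk"
      proof (cases k)
        case 0 then show ?thesis using P nthn by (simp add: n_def)
      next
        case (Suc k') then show ?thesis using N k by (simp add: n_def)
      qed
    qed
    show "\<forall>k<Suc m. bparent (boxes st1 ! (length (boxes st) + k)) =
        (if k = 0 then None else Some (length (boxes st) + k - 1))"
    proof (intro allI impI)
      fix k assume k: "k < Suc m"
      show "bparent (boxes st1 ! (length (boxes st) + k)) = (if k = 0 then None else Some (length (boxes st) + k - 1))"
      proof (cases k)
        case 0 then show ?thesis using P nthn by (simp add: n_def)
      next
        case (Suc k') then show ?thesis using N k by (simp add: n_def)
      qed
    qed
    show "None = None \<or> (\<exists>r. None = Some r \<and> r < length (boxes st) \<and> \<not> has_piece st r)" by simp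
    show "0 + Suc m = Suc (length Tk)" by (simp add: m_def)
    show "\<forall>k. Suc k < Suc m \<longrightarrow> Good st1 (length (boxes st) + k) (length (boxes st) + Suc k)"
    proof (intro allI impI)
      fix k assume k: "Suc k < Suc m"
      show "Good st1 (length (boxes st) + k) (length (boxes st) + Suc k)"
      proof (cases k)
        case 0 then show ?thesis using G1 k by (simp add: n_def)
      next
        case (Suc k') then show ?thesis using G2 k by (simp add: n_def)
      qed
    qed
    show "valid_type Tk" by (rule vt)
    show "\<forall>i'<length (boxes st). \<forall>d. 0 \<le> d \<longrightarrow> d < length Tk \<longrightarrow> btype (boxes st ! i') = take d Tk
      \<longrightarrow> \<not> has_piece st i' \<longrightarrow> \<not> (\<exists>v. fits_child st i' (take (Suc d) Tk) v)"
    proof (intro allI impI notI)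
      fix i' d assume i': "i' < length (boxes st)" and d: "0 \<le> d" "d < length Tk"
        and bt: "btype (boxes st ! i') = take d Tk" and nh: "\<not> has_piece st i'"
        and f: "\<exists>v. fits_child st i' (take (Suc d) Tk) v"
      have ld: "length (btype (boxes st ! i')) = d" using bt d by simp
      have "candidate st P i' Tk" unfolding candidate_def using i' nh new(4) bt ld d f by simp
      then show False using new(2) by blast
    qed
  qed
qed

lemma reachable_Inv: "reachable st \<Longrightarrow> Inv st"
  by (induction rule: reachable.induct) (auto intro: Inv_init Inv_step)


lemma three_elems:
  assumes "2 < card S"
  shows "\<exists>a b c. a \<in> S \<and> b \<in> S \<and> c \<in> S \<and> a \<noteq> b \<and> a \<noteq> c \<and> b \<noteq> c"
proof -
  from assms have "Suc (Suc (Suc 0)) \<le> card S" by simp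
  then show ?thesis by (auto simp: card_le_Suc_iff)
qed

theorem lemma16:
  fixes st :: pstate and T :: "int list"
  assumes "reachable st"
  shows "card {i. i < length (boxes st) \<and> btype (boxes st ! i) = T \<and> near_empty st i} \<le> 2"
proof (rule ccontr)
  define S where "S = {i. i < length (boxes st) \<and> btype (boxes st ! i) = T \<and> near_empty st i}"
  assume "\<not> card {i. i < length (boxes st) \<and> btype (boxes st ! i) = T \<and> near_empty st i} \<le> 2"
  then have "2 < card S" by (simp add: S_def)
  then obtain a b c where abc: "a \<in> S" "b \<in> S" "c \<in> S" "a \<noteq> b" "a \<noteq> c" "b \<noteq> c"
    using three_elems by blast
  have inv: "Inv st" using assms by (rule reachable_Inv)
  note I5 = conjunct2[OF conjunct2[OF conjunct2[OF conjunct2[OF inv[unfolded Inv_def]]]]]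
  define x where "x i = last (btype (boxes st ! (THE c. children st i = {c})))" for i
  have sing: "\<And>i. i \<in> S \<Longrightarrow> children st i = {THE c. children st i = {c}}"
  proof -
    fix i assume "i \<in> S"
    then have "card (children st i) = 1" by (simp add: S_def near_empty_def)
    then obtain c where c: "children st i = {c}" by (auto simp: card_1_singleton_iff)
    then have "(THE c. children st i = {c}) = c" by auto
    then show "children st i = {THE c. children st i = {c}}" using c by simp
  qed
  have lt: "\<And>i j. i \<in> S \<Longrightarrow> j \<in> S \<Longrightarrow> i < j \<Longrightarrow> x i \<noteq> 0 \<and> x j = - x i"
  proof -
    fix i j assume i: "i \<in> S" and j: "j \<in> S" and ij: "i < j"
    have "j < length (boxes st)" "btype (boxes st ! i) = btype (boxes st ! j)" using i j by (auto simp: S_def)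
    then show "x i \<noteq> 0 \<and> x j = - x i"
      using I5[rule_format, OF ij _ _ sing[OF i] sing[OF j]] unfolding x_def by blast
  qed
  have pr: "\<And>i j. i \<in> S \<Longrightarrow> j \<in> S \<Longrightarrow> i \<noteq> j \<Longrightarrow> x i \<noteq> 0 \<and> x j = - x i"
  proof -
    fix i j assume i: "i \<in> S" and j: "j \<in> S" and ij: "i \<noteq> j"
    show "x i \<noteq> 0 \<and> x j = - x i"
    proof (cases "i < j")
      case True then show ?thesis using lt i j by blast
    next
      case False then have "j < i" using ij by simp
      then have "x j \<noteq> 0 \<and> x i = - x j" using lt i j by blast
      then show ?thesis by simp
    qed
  qed
  have "x b = - x a" "x c = - x a" "x c = - x b" "x b \<noteq> 0" using pr abc by blast+
  then show False by simp
qed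

end
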